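(* Let $U,V$ be unitary operators on a finite-dimensional complex Hilbert space $\mathcal H$. Then there exists a real number $x$ such that $$D(U,V)=\tfrac12\,\|U-e^{ix}V\|,$$ where $\|\cdot\|$ is the operator norm $\|A\|=\max_{\|\psi\|=1}\|A\psi\|$.
   Context: For unitary operators $U,V$ on a finite-dimensional complex Hilbert space $\mathcal H$ define the u-distance $D(U,V)=\max_{\|\psi\|=1}\big(1-|\langle\psi,U^\dagger V\psi\rangle|^2\big)^{1/2}=\big(1-\min_{\|\psi\|=1}|\langle\psi,U^\dagger V\psi\rangle|^2\big)^{1/2}$. *)

theory Defs
  imports "HOL-Analysis.Analysis"
begin

text \<open>The finite-dimensional complex Hilbert space H is modelled as complex ^ 'n
  ('n a finite index type, so dim H = CARD('n) >= 1); the HOL-Analysis norm on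
  complex ^ 'n is the Hilbert-space norm sqrt(sum |psi_i|^2).\<close>

definition cinner :: "complex ^ 'n \<Rightarrow> complex ^ 'n \<Rightarrow> complex" where
  "cinner \<psi> \<phi> = (\<Sum>i\<in>UNIV. cnj (\<psi> $ i) * \<phi> $ i)"

definition adjoint_mat :: "complex ^ 'n ^ 'n \<Rightarrow> complex ^ 'n ^ 'n" where
  "adjoint_mat A = (\<chi> i j. cnj (A $ j $ i))"

definition unitary_mat :: "complex ^ 'n ^ 'n \<Rightarrow> bool" where
  "unitary_mat U \<longleftrightarrow> U ** adjoint_mat U = mat 1 \<and> adjoint_mat U ** U = mat 1"

definition udist :: "complex ^ 'n ^ 'n \<Rightarrow> complex ^ 'n ^ 'n \<Rightarrow> real" where
  "udist U V = Sup {sqrt (1 - (cmod (cinner \<psi> ((adjoint_mat U ** V) *v \<psi>)))\<^sup>2) | \<psi>. norm \<psi> = 1}"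

definition op_norm :: "complex ^ 'n ^ 'n \<Rightarrow> real" where
  "op_norm A = Sup {norm (A *v \<psi>) | \<psi>. norm \<psi> = 1}"

end

theory Submission
  imports Defs
begin


lemma cinner_add_right: "cinner u (v + w) = cinner u v + cinner u w"
  by (simp add: cinner_def algebra_simps sum.distrib)
lemma cinner_add_left: "cinner (u + v) w = cinner u w + cinner v w"
  by (simp add: cinner_def algebra_simps sum.distrib)
lemma cinner_diff_right: "cinner u (v - w) = cinner u v - cinner u w"
  by (simp add: cinner_def algebra_simps sum_subtractf)
lemma cinner_diff_left: "cinner (u - v) w = cinner u w - cinner v w"
  by (simp add: cinner_def algebra_simps sum_subtractf)
lemma cinner_scale_right: "cinner u (c *s v) = c * cinner u v"
  by (simp add: cinner_def sum_distrib_left algebra_simps)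
lemma cinner_scale_left: "cinner (c *s u) v = cnj c * cinner u v"
  by (simp add: cinner_def sum_distrib_left algebra_simps)
lemma cinner_zero_right[simp]: "cinner u 0 = 0"
  by (simp add: cinner_def)
lemma cinner_zero_left[simp]: "cinner 0 u = 0"
  by (simp add: cinner_def)
lemma cinner_sum_right: "cinner u (sum f A) = (\<Sum>i\<in>A. cinner u (f i))"
  by (induction A rule: infinite_finite_induct) (auto simp: cinner_add_right)
lemma cinner_sum_left: "cinner (sum f A) u = (\<Sum>i\<in>A. cinner (f i) u)"
  by (induction A rule: infinite_finite_induct) (auto simp: cinner_add_left)
lemma cinner_cnj: "cnj (cinner u v) = cinner v u"
  by (simp add: cinner_def mult.commute)
lemma cinner_self: "cinner v v = complex_of_real ((norm v)\<^sup>2)"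
proof -
  have "(norm v)\<^sup>2 = (\<Sum>i\<in>UNIV. (cmod (v $ i))\<^sup>2)"
    by (simp add: norm_vec_def L2_set_def sum_nonneg)
  then show ?thesis
    by (simp add: cinner_def complex_norm_square[symmetric] mult.commute)
qed
lemma cinner_self_real: "Re (cinner v v) = (norm v)\<^sup>2"
  by (simp add: cinner_self)
lemma cinner_adj: "cinner u (A *v v) = cinner (adjoint_mat A *v u) v"
proof -
  have "cinner u (A *v v) = (\<Sum>i\<in>UNIV. \<Sum>j\<in>UNIV. cnj (u $ i) * (A $ i $ j * v $ j))"
    by (simp add: cinner_def matrix_vector_mult_def sum_distrib_left)
  also have "\<dots> = (\<Sum>j\<in>UNIV. \<Sum>i\<in>UNIV. cnj (u $ i) * (A $ i $ j * v $ j))"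
    by (rule sum.swap)
  also have "\<dots> = cinner (adjoint_mat A *v u) v"
    by (simp add: cinner_def matrix_vector_mult_def adjoint_mat_def sum_distrib_left sum_distrib_right ac_simps)
  finally show ?thesis .
qed
lemma mv_add: "A *v (u + v) = A *v u + A *v v"
  by (simp add: matrix_vector_right_distrib)
lemma mv_diff: "(A::complex^'n^'m) *v (u - v) = A *v u - A *v v"
  by (simp add: vec_eq_iff matrix_vector_mult_def sum_subtractf[symmetric] right_diff_distrib)
lemma mv_scale: "(A::complex^'n^'m) *v (c *s v) = c *s (A *v v)"
  by (simp add: vec_eq_iff matrix_vector_mult_def sum_distrib_left algebra_simps)
lemma mv_sum: "(A::complex^'n^'m) *v (sum f S) = (\<Sum>i\<in>S. A *v f i)"
  by (induction S rule: infinite_finite_induct) (auto simp: mv_add)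
lemma adjoint_mult: "adjoint_mat (A ** B) = adjoint_mat B ** adjoint_mat A"
  by (simp add: vec_eq_iff adjoint_mat_def matrix_matrix_mult_def mult.commute)
lemma adjoint_adjoint[simp]: "adjoint_mat (adjoint_mat A) = A"
  by (simp add: vec_eq_iff adjoint_mat_def)
lemma adjoint_add: "adjoint_mat (A + B) = adjoint_mat A + adjoint_mat B"
  by (simp add: vec_eq_iff adjoint_mat_def)
lemma cinner_adj': "cinner (A *v u) v = cinner u (adjoint_mat A *v v)"
  by (metis adjoint_adjoint cinner_adj)
lemma norm_via_cinner: "norm v = sqrt (Re (cinner v v))"
  by (simp add: cinner_self_real)



lemma norm_smult_c: "norm (c *s (v::complex^'n)) = cmod c * norm v"
proof -
  have "(norm (c *s v))\<^sup>2 = (cmod c * norm v)\<^sup>2"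
  proof -
    have "cinner (c *s v) (c *s v) = (cnj c * c) * cinner v v"
      by (simp add: cinner_scale_left cinner_scale_right)
    also have "\<dots> = complex_of_real ((cmod c)\<^sup>2 * (norm v)\<^sup>2)"
      by (simp add: cinner_self complex_norm_square mult.commute del: of_real_power)
    finally have "complex_of_real ((norm (c *s v))\<^sup>2) = complex_of_real ((cmod c)\<^sup>2 * (norm v)\<^sup>2)"
      using cinner_self[of "c *s v"] by metis
    then show ?thesis by (simp only: of_real_eq_iff power_mult_distrib)
  qed
  then show ?thesis by (simp add: power2_eq_iff_nonneg)
qed

lemma cont_quad: "continuous_on S (\<lambda>v::complex^'n. Re (cinner v ((H::complex^'n^'n) *v v)))"
  unfolding cinner_def matrix_vector_mult_def
  by (intro continuous_intros)



lemma quad_scale: "cinner (c *s v) ((H::complex^'n^'n) *v (c *s v)) = (cnj c * c) * cinner v (H *v v)"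
  by (simp add: mv_scale cinner_scale_left cinner_scale_right)

lemma herm_eigvec:
  fixes H :: "complex^'n^'n" and P :: "(complex^'n) set"
  assumes herm: "adjoint_mat H = H"
  and addP: "\<And>u v. u\<in>P \<Longrightarrow> v\<in>P \<Longrightarrow> u+v \<in> P"
  and scaleP: "\<And>c u. u\<in>P \<Longrightarrow> c *s u \<in> P"
  and cl: "closed P"
  and inv: "\<And>u. u\<in>P \<Longrightarrow> H *v u \<in> P"
  and v0: "v0 \<in> P" "v0 \<noteq> 0"
  shows "\<exists>u\<in>P. norm u = 1 \<and> (\<exists>a. H *v u = a *s u)"
proof -
  define g where "g v = Re (cinner v (H *v v))" for v
  define S where "S = P \<inter> sphere 0 1"
  have cS: "compact S" unfolding S_def by (intro closed_Int_compact cl compact_sphere)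
  have v0n: "norm v0 > 0" using v0 by simp
  have "complex_of_real (1 / norm v0) *s v0 \<in> S"
    using v0 v0n scaleP unfolding S_def by (simp add: norm_smult_c norm_divide)
  then have Sne: "S \<noteq> {}" by blast
  have "continuous_on S g" unfolding g_def by (rule cont_quad)
  from continuous_attains_inf[OF cS Sne this] obtain u where uS: "u \<in> S"
    and umin: "\<And>y. y \<in> S \<Longrightarrow> g u \<le> g y" by blast
  define h where "h = g u"
  have uP: "u \<in> P" and nu: "norm u = 1" using uS unfolding S_def by auto
  have gscale: "g (c *s v) = (cmod c)\<^sup>2 * g v" for c v
    unfolding g_def quad_scale by (simp add: complex_norm_square[symmetric] mult.commute del: of_real_power)
  have low: "g v \<ge> h * (norm v)\<^sup>2" if "v \<in> P" for v
  proof (cases "v = 0")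
    case True then show ?thesis by (simp add: g_def)
  next
    case False
    then have nv: "norm v > 0" by simp
    let ?w = "complex_of_real (1 / norm v) *s v"
    have "?w \<in> S" using that nv scaleP unfolding S_def by (simp add: norm_smult_c norm_divide)
    then have "h \<le> g ?w" using umin h_def by blast
    also have "g ?w = g v / (norm v)\<^sup>2" by (simp add: gscale power_divide norm_divide)
    finally show ?thesis using nv by (simp add: field_simps)
  qed
  define \<eta> where "\<eta> = H *v u - complex_of_real h *s u"
  have etaP: "\<eta> \<in> P" unfolding \<eta>_def
    using addP[OF inv[OF uP] scaleP[OF uP, of "- complex_of_real h"]]
    by (simp add: vector_smult_lneg)
  have cuu: "cinner u u = 1" using nu by (simp add: cinner_self)
  have ReuHu: "Re (cinner u (H *v u)) = h" by (simp add: h_def g_def)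
  have herm2: "cinner x (H *v y) = cnj (cinner y (H *v x))" for x y
    by (metis cinner_adj cinner_cnj herm)
  have key: "g (u + complex_of_real t *s \<eta>) - h * (norm (u + complex_of_real t *s \<eta>))\<^sup>2
      = 2 * t * (norm \<eta>)\<^sup>2 + t\<^sup>2 * (g \<eta> - h * (norm \<eta>)\<^sup>2)" for t
  proof -
    have e1: "Re (cinner \<eta> (H *v u)) = (norm \<eta>)\<^sup>2"
    proof -
      have "H *v u = \<eta> + complex_of_real h *s u" by (simp add: \<eta>_def)
      then have "cinner \<eta> (H *v u) = cinner \<eta> \<eta> + complex_of_real h * cinner \<eta> u"
        by (simp add: cinner_add_right cinner_scale_right)
      moreover have "Re (cinner \<eta> u) = 0"
      proof -
        have "cinner \<eta> u = cinner (H *v u) u - complex_of_real h * cinner u u"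
          by (simp add: \<eta>_def cinner_diff_left cinner_scale_left)
        moreover have "Re (cinner (H *v u) u) = h"
          using ReuHu cinner_cnj[of "H *v u" u] by (metis cnj.simps(1))
        ultimately show ?thesis using cuu by simp
      qed
      ultimately show ?thesis by (simp add: cinner_self_real)
    qed
    have e2: "Re (cinner u \<eta>) = 0"
      unfolding \<eta>_def using ReuHu cuu by (simp add: cinner_diff_right cinner_scale_right)
    have e3: "Re (cinner u (H *v \<eta>)) = Re (cinner \<eta> (H *v u))"
      by (simp add: herm2[of u \<eta>])
    have e4: "Re (cinner \<eta> u) = 0" using e2 cinner_cnj[of u \<eta>] by (metis cnj.simps(1))
    have A1: "Re (cinner (u + complex_of_real t *s \<eta>) (H *v (u + complex_of_real t *s \<eta>)))
       = Re (cinner u (H *v u)) + t * Re (cinner u (H *v \<eta>)) + t * Re (cinner \<eta> (H *v u))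
         + t\<^sup>2 * Re (cinner \<eta> (H *v \<eta>))"
      by (simp add: mv_add mv_scale cinner_add_left cinner_add_right cinner_scale_left
          cinner_scale_right power2_eq_square algebra_simps)
    have A2: "Re (cinner (u + complex_of_real t *s \<eta>) (u + complex_of_real t *s \<eta>))
       = Re (cinner u u) + t * Re (cinner u \<eta>) + t * Re (cinner \<eta> u) + t\<^sup>2 * Re (cinner \<eta> \<eta>)"
      by (simp add: cinner_add_left cinner_add_right cinner_scale_left
          cinner_scale_right power2_eq_square algebra_simps)
    have N: "(norm (u + complex_of_real t *s \<eta>))\<^sup>2 = 1 + t\<^sup>2 * (norm \<eta>)\<^sup>2"
      using A2 e2 e4 cuu by (simp add: cinner_self_real)
    have G: "g (u + complex_of_real t *s \<eta>) = h + 2 * t * (norm \<eta>)\<^sup>2 + t\<^sup>2 * g \<eta>"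
      unfolding g_def A1 e3 e1 ReuHu by simp
    show ?thesis unfolding G N by (simp add: algebra_simps)
  qed
  have "\<eta> = 0"
  proof (rule ccontr)
    assume "\<eta> \<noteq> 0"
    then have a: "(norm \<eta>)\<^sup>2 > 0" by simp
    define a where "a = (norm \<eta>)\<^sup>2"
    define q where "q = g \<eta> - h * (norm \<eta>)\<^sup>2"
    have q0: "q \<ge> 0" using low[OF etaP] q_def by simp
    define t where "t = - a / (q + 1)"
    have t0: "t < 0" using a q0 by (simp add: t_def a_def)
    have "2 * a + t * q > 0"
    proof -
      have "t * q = - a * (q / (q+1))" using q0 by (simp add: t_def)
      moreover have "q / (q+1) < 1" using q0 by simp
      moreover have "a * (q / (q+1)) < a * 1"
        using a a_def \<open>q / (q+1) < 1\<close> by (intro mult_strict_left_mono) auto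
      ultimately have "t * q > - a" by simp
      then show ?thesis using a unfolding a_def by linarith
    qed
    then have "t * (2 * a + t * q) < 0" using t0 by (simp add: mult_neg_pos)
    then have "2 * t * a + t\<^sup>2 * q < 0" by (simp add: algebra_simps power2_eq_square)
    moreover have "2 * t * a + t\<^sup>2 * q \<ge> 0"
      using key[of t] low[OF addP[OF uP scaleP[OF etaP, of "complex_of_real t"]]] unfolding a_def q_def by linarith
    ultimately show False by simp
  qed
  then have "H *v u = complex_of_real h *s u" by (simp add: \<eta>_def)
  then show ?thesis using uP nu by blast
qed



lemma closed_eig: "closed {v::complex^'n. (H::complex^'n^'n) *v v = a *s v}"
proof -
  have "{v::complex^'n. H *v v = a *s v} = (\<Inter>i. {v. (\<Sum>j\<in>UNIV. H$i$j * v$j) = a * v$i})"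
    by (auto simp: vec_eq_iff matrix_vector_mult_def)
  also have "closed \<dots>"
    by (intro closed_INT ballI closed_Collect_eq continuous_intros)
  finally show ?thesis .
qed

lemma unitary_eigvec:
  fixes W :: "complex^'n^'n" and P :: "(complex^'n) set"
  assumes u1: "W ** adjoint_mat W = mat 1" and u2: "adjoint_mat W ** W = mat 1"
  and addP: "\<And>u v. u\<in>P \<Longrightarrow> v\<in>P \<Longrightarrow> u+v \<in> P"
  and scaleP: "\<And>c u. u\<in>P \<Longrightarrow> c *s u \<in> P"
  and cl: "closed P"
  and invW: "\<And>u. u\<in>P \<Longrightarrow> W *v u \<in> P"
  and invWa: "\<And>u. u\<in>P \<Longrightarrow> adjoint_mat W *v u \<in> P"
  and v0: "v0 \<in> P" "v0 \<noteq> 0"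
  shows "\<exists>u\<in>P. norm u = 1 \<and> (\<exists>l. W *v u = l *s u)"
proof -
  define H1 where "H1 = (\<chi> i j. (W$i$j + adjoint_mat W $i$j) / 2)"
  define H2 where "H2 = (\<chi> i j. (W$i$j - adjoint_mat W $i$j) / (2 * \<i>))"
  have h1: "adjoint_mat H1 = H1"
    by (simp add: vec_eq_iff H1_def adjoint_mat_def add.commute)
  have h2: "adjoint_mat H2 = H2"
    by (simp add: vec_eq_iff H2_def adjoint_mat_def field_simps)
  have hv1: "H1 *v v = (1/2) *s (W *v v + adjoint_mat W *v v)" for v
    by (simp add: vec_eq_iff H1_def matrix_vector_mult_def sum_distrib_left sum.distrib[symmetric]
        algebra_simps add_divide_distrib del: adjoint_mat_def)
  have hv2: "H2 *v v = (1/(2*\<i>)) *s (W *v v - adjoint_mat W *v v)" for v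
    by (simp add: vec_eq_iff H2_def matrix_vector_mult_def sum_distrib_left sum_subtractf[symmetric]
        algebra_simps diff_divide_distrib del: adjoint_mat_def)
  have wdec: "W *v v = H1 *v v + \<i> *s (H2 *v v)" for v
    unfolding hv1 hv2 by (simp add: vec_eq_iff field_simps)
  have WWa: "W *v (adjoint_mat W *v v) = v" for v
    by (simp add: matrix_vector_mul_assoc u1)
  have WaW: "adjoint_mat W *v (W *v v) = v" for v
    by (simp add: matrix_vector_mul_assoc u2)
  have comm: "H1 *v (H2 *v v) = H2 *v (H1 *v v)" for v
    unfolding hv1 hv2 by (simp add: mv_add mv_diff mv_scale WWa WaW vec_eq_iff field_simps)
  have P1: "H1 *v v \<in> P" if "v \<in> P" for v
    unfolding hv1 using that by (intro scaleP addP invW invWa)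
  have P2: "H2 *v v \<in> P" if "v \<in> P" for v
  proof -
    have "W *v v - adjoint_mat W *v v = W *v v + (-1) *s (adjoint_mat W *v v)"
      by (simp add: vector_smult_lneg)
    then show ?thesis unfolding hv2 using that by (metis scaleP addP invW invWa)
  qed
  obtain u where uP: "u \<in> P" and nu: "norm u = 1" and ua: "\<exists>a. H1 *v u = a *s u"
    using herm_eigvec[OF h1 addP scaleP cl P1 v0] by blast
  then obtain a where ua: "H1 *v u = a *s u" by blast
  define P' where "P' = P \<inter> {v. H1 *v v = a *s v}"
  have "\<exists>w\<in>P'. norm w = 1 \<and> (\<exists>b. H2 *v w = b *s w)"
  proof (rule herm_eigvec[OF h2, of P' u])
    show "x + y \<in> P'" if "x \<in> P'" "y \<in> P'" for x y
      using that addP unfolding P'_def by (auto simp: mv_add vector_add_ldistrib)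
    show "c *s x \<in> P'" if "x \<in> P'" for c x
      using that scaleP unfolding P'_def by (auto simp: mv_scale vector_smult_assoc mult.commute)
    show "closed P'" unfolding P'_def by (intro closed_Int cl closed_eig)
    show "H2 *v x \<in> P'" if "x \<in> P'" for x
      using that P2 unfolding P'_def by (auto simp: comm mv_scale)
    show "u \<in> P'" using uP ua unfolding P'_def by auto
    show "u \<noteq> 0" using nu by auto
  qed
  then obtain w b where wP: "w \<in> P'" and nw: "norm w = 1" and wb: "H2 *v w = b *s w" by blast
  have "W *v w = (a + \<i> * b) *s w"
    using wP unfolding wdec wb P'_def by (simp add: vec_eq_iff algebra_simps)
  then show ?thesis using wP nw unfolding P'_def by blast
qed



definition orthn :: "nat \<Rightarrow> (nat \<Rightarrow> complex^'n) \<Rightarrow> bool" where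
  "orthn k e \<longleftrightarrow> (\<forall>i<k. \<forall>j<k. cinner (e i) (e j) = (if i = j then 1 else 0))"

lemma orthn_bound:
  fixes e :: "nat \<Rightarrow> complex^'n"
  assumes "orthn k e" shows "k \<le> CARD('n)"
proof -
  have inj: "inj_on e {..<k}"
  proof (rule inj_onI)
    fix i j assume "i \<in> {..<k}" "j \<in> {..<k}" "e i = e j"
    then show "i = j" using assms unfolding orthn_def
      by (metis (no_types, lifting) lessThan_iff zero_neq_one)
  qed
  have ind: "vec.independent (e ` {..<k})"
  proof (rule vec.independent_if_scalars_zero)
    show "finite (e ` {..<k})" by simp
    fix f x assume s: "(\<Sum>x\<in>e ` {..<k}. f x *s x) = 0" and x: "x \<in> e ` {..<k}"
    then obtain j where j: "j < k" "x = e j" by auto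
    have "0 = cinner (e j) (\<Sum>x\<in>e ` {..<k}. f x *s x)" using s by simp
    also have "\<dots> = (\<Sum>i<k. f (e i) * cinner (e j) (e i))"
      by (simp add: cinner_sum_right cinner_scale_right sum.reindex[OF inj])
    also have "\<dots> = (\<Sum>i<k. if i = j then f (e i) else 0)"
      using assms j unfolding orthn_def by (intro sum.cong) auto
    also have "\<dots> = f x" using j by simp
    finally show "f x = 0" by simp
  qed
  have "card (e ` {..<k}) \<le> vec.dim (UNIV :: (complex^'n) set)"
    using vec.independent_card_le_dim[OF _ ind] by blast
  moreover have "vec.dim (UNIV :: (complex^'n) set) = CARD('n)" by (rule vec_dim_card)
  ultimately show ?thesis using card_image[OF inj] by simp
qed



lemma eig_facts:
  fixes W :: "complex^'n^'n"
  assumes u1: "W ** adjoint_mat W = mat 1" and u2: "adjoint_mat W ** W = mat 1"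
  and ev: "W *v e = l *s e" and ee: "cinner e e = 1"
  shows "cmod l = 1" "adjoint_mat W *v e = cnj l *s e"
proof -
  have "cinner (W *v e) (W *v e) = cinner e (adjoint_mat W *v (W *v e))" by (rule cinner_adj')
  also have "\<dots> = 1" by (simp add: matrix_vector_mul_assoc u2 ee)
  finally have "l * cnj l = 1" using ev ee by (simp add: cinner_scale_left cinner_scale_right)
  then have "cnj l * l = 1" by (simp add: mult.commute)
  then have "complex_of_real ((cmod l)\<^sup>2) = 1"
    by (simp add: complex_norm_square mult.commute del: of_real_power)
  then have "(cmod l)\<^sup>2 = 1" by (metis of_real_eq_1_iff)
  then show "cmod l = 1" using norm_ge_zero[of l] by (auto simp: power2_eq_1_iff)
  from \<open>cnj l * l = 1\<close> have cl: "cnj l * l = 1" .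
  have "adjoint_mat W *v (W *v e) = e" by (simp add: matrix_vector_mul_assoc u2)
  then have "l *s (adjoint_mat W *v e) = e" by (simp add: ev mv_scale)
  then have "cnj l *s (l *s (adjoint_mat W *v e)) = cnj l *s e" by simp
  then show "adjoint_mat W *v e = cnj l *s e" by (simp add: vector_smult_assoc cl)
qed

lemma eigenbasis:
  fixes W :: "complex^'n^'n"
  assumes u1: "W ** adjoint_mat W = mat 1" and u2: "adjoint_mat W ** W = mat 1"
  shows "\<exists>K e l. 0 < K \<and> orthn K e \<and>
     (\<forall>i<K. W *v e i = l i *s e i \<and> adjoint_mat W *v e i = cnj (l i) *s e i \<and> cmod (l i) = 1) \<and>
     (\<forall>v. v = (\<Sum>i<K. cinner (e i) v *s e i))"
proof -
  define good where "good k \<longleftrightarrow> (\<exists>e l. orthn k e \<and> (\<forall>i<k. W *v e i = l i *s e i))" for k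
  define Ks where "Ks = {k. good k}"
  have finKs: "finite Ks"
  proof (rule finite_subset[of _ "{..CARD('n)}"])
    show "Ks \<subseteq> {..CARD('n)}"
      unfolding Ks_def good_def using orthn_bound by (auto simp: atMost_iff) 
  qed simp
  have "0 \<in> Ks" unfolding Ks_def good_def orthn_def by auto
  define K where "K = Max Ks"
  have "K \<in> Ks" unfolding K_def using finKs \<open>0 \<in> Ks\<close> by (intro Max_in) auto
  then obtain e l where orth: "orthn K e" and eig: "\<forall>i<K. W *v e i = l i *s e i"
    unfolding Ks_def good_def by blast
  have ee: "cinner (e i) (e i) = 1" if "i < K" for i using orth that unfolding orthn_def by auto
  have facts: "cmod (l i) = 1 \<and> adjoint_mat W *v e i = cnj (l i) *s e i" if "i < K" for i
    using eig_facts[OF u1 u2 _ ee[OF that]] eig that by blast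
  have compl: "v = 0" if v: "\<forall>i<K. cinner (e i) v = 0" for v
  proof (rule ccontr)
    assume v0: "v \<noteq> 0"
    define P where "P = {v. \<forall>i<K. cinner (e i) v = 0}"
    have "\<exists>u\<in>P. norm u = 1 \<and> (\<exists>m. W *v u = m *s u)"
    proof (rule unitary_eigvec[OF u1 u2, of P v])
      show "x + y \<in> P" if "x \<in> P" "y \<in> P" for x y
        using that unfolding P_def by (simp add: cinner_add_right)
      show "c *s x \<in> P" if "x \<in> P" for c x
        using that unfolding P_def by (simp add: cinner_scale_right)
      show "closed P"
      proof -
        have "P = (\<Inter>i\<in>{..<K}. {v. (\<Sum>j\<in>UNIV. cnj (e i $ j) * v $ j) = 0})"
          unfolding P_def cinner_def by auto
        also have "closed \<dots>" by (intro closed_INT ballI closed_Collect_eq continuous_intros)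
        finally show ?thesis .
      qed
      show "W *v x \<in> P" if "x \<in> P" for x
        using that facts unfolding P_def by (simp add: cinner_adj cinner_scale_left)
      show "adjoint_mat W *v x \<in> P" if "x \<in> P" for x
        using that eig unfolding P_def by (simp add: cinner_adj cinner_scale_left)
      show "v \<in> P" using v unfolding P_def by simp
      show "v \<noteq> 0" by fact
    qed
    then obtain u m where uP: "u \<in> P" and nu: "norm u = 1" and um: "W *v u = m *s u" by blast
    have uu: "cinner u u = 1" using nu by (simp add: cinner_self)
    have ue: "cinner u (e i) = 0" if "i < K" for i
      using uP that cinner_cnj[of "e i" u] unfolding P_def by simp
    have "orthn (Suc K) (e(K := u))"
      unfolding orthn_def using orth uP uu ue unfolding orthn_def P_def
      by (auto simp: less_Suc_eq)
    moreover have "\<forall>i<Suc K. W *v (e(K := u)) i = (l(K := m)) i *s (e(K := u)) i"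
      using eig um by (auto simp: less_Suc_eq)
    ultimately have "Suc K \<in> Ks" unfolding Ks_def good_def by blast
    then have "Suc K \<le> K" unfolding K_def using finKs by (simp add: Max_ge)
    then show False by simp
  qed
  have K0: "0 < K"
  proof (rule ccontr)
    assume "\<not> 0 < K"
    then have K: "K = 0" by simp
    obtain x :: "complex^'n" where x: "norm x = 1" using vector_choose_size[of 1] by auto
    have "x = 0" by (rule compl) (simp add: K)
    then show False using x by simp
  qed
  have expand: "v = (\<Sum>i<K. cinner (e i) v *s e i)" for v
  proof -
    define w where "w = v - (\<Sum>i<K. cinner (e i) v *s e i)"
    have "cinner (e j) w = 0" if j: "j < K" for j
    proof -
      have "cinner (e j) (\<Sum>i<K. cinner (e i) v *s e i) = (\<Sum>i<K. if i = j then cinner (e j) v else 0)"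
        unfolding cinner_sum_right cinner_scale_right
        using orth j unfolding orthn_def by (intro sum.cong) auto
      also have "\<dots> = cinner (e j) v" using j by simp
      finally show ?thesis unfolding w_def cinner_diff_right by simp
    qed
    then have "w = 0" using compl by blast
    then show ?thesis unfolding w_def by simp
  qed
  show ?thesis
    by (rule exI[of _ K], rule exI[of _ e], rule exI[of _ l]) (use K0 orth eig facts expand in blast)
qed



lemma coeff_expand:
  assumes ex: "\<forall>v. v = (\<Sum>i<K. cinner (e i) v *s e i)"
  shows "cinner \<phi> \<psi> = (\<Sum>i<K. cnj (cinner (e i) \<phi>) * cinner (e i) \<psi>)"
proof -
  have "cinner \<phi> \<psi> = cinner \<phi> (\<Sum>i<K. cinner (e i) \<psi> *s e i)" using ex by metis
  also have "\<dots> = (\<Sum>i<K. cinner (e i) \<psi> * cinner \<phi> (e i))"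
    by (simp add: cinner_sum_right cinner_scale_right)
  also have "\<dots> = (\<Sum>i<K. cnj (cinner (e i) \<phi>) * cinner (e i) \<psi>)"
    by (simp add: cinner_cnj mult.commute)
  finally show ?thesis .
qed

lemma norm_expand:
  assumes ex: "\<forall>v. v = (\<Sum>i<K. cinner (e i) v *s e i)"
  shows "(norm \<phi>)\<^sup>2 = (\<Sum>i<K. (cmod (cinner (e i) \<phi>))\<^sup>2)"
proof -
  have "complex_of_real ((norm \<phi>)\<^sup>2) = (\<Sum>i<K. cnj (cinner (e i) \<phi>) * cinner (e i) \<phi>)"
    using coeff_expand[OF ex, of \<phi> \<phi>] by (simp add: cinner_self)
  also have "\<dots> = complex_of_real (\<Sum>i<K. (cmod (cinner (e i) \<phi>))\<^sup>2)"
    by (simp add: complex_norm_square mult.commute del: of_real_power)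
  finally show ?thesis by (simp only: of_real_eq_iff)
qed

lemma nearest:
  fixes z0 p :: complex
  assumes h: "\<And>t. 0 < t \<Longrightarrow> t \<le> 1 \<Longrightarrow> cmod z0 \<le> cmod (z0 + complex_of_real t * (p - z0))"
  shows "Re (cnj z0 * p) \<ge> (cmod z0)\<^sup>2"
proof -
  define d where "d = p - z0"
  define r where "r = Re z0 * Re d + Im z0 * Im d"
  define s where "s = (Re d)\<^sup>2 + (Im d)\<^sup>2"
  have ineq: "0 \<le> 2 * t * r + t\<^sup>2 * s" if "0 < t" "t \<le> 1" for t
  proof -
    have "(cmod z0)\<^sup>2 \<le> (cmod (z0 + complex_of_real t * d))\<^sup>2"
      using h[OF that] d_def by (simp add: power_mono)
    then show ?thesis unfolding cmod_power2 r_def s_def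
      by (simp add: power2_eq_square algebra_simps)
  qed
  have "r \<ge> 0"
  proof (rule ccontr)
    assume "\<not> r \<ge> 0"
    then have r0: "r < 0" by simp
    have s0: "s > 0"
    proof -
      have "d \<noteq> 0" using r0 unfolding r_def by auto
      then show ?thesis unfolding s_def
        by (metis complex_eq_iff sum_power2_gt_zero_iff zero_complex.simps)
    qed
    define t where "t = min 1 (- r / s)"
    have t0: "0 < t" "t \<le> 1" using r0 s0 by (auto simp: t_def divide_neg_pos)
    have "t * s \<le> - r" using s0 by (simp add: t_def min_def field_simps split: if_splits)
    then have "t * (t * s) \<le> t * (- r)" using t0 by (intro mult_left_mono) auto
    then have "2 * t * r + t\<^sup>2 * s \<le> t * r" by (simp add: power2_eq_square algebra_simps)
    moreover have "t * r < 0" using t0 r0 by (simp add: mult_pos_neg)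
    ultimately show False using ineq[OF t0] by linarith
  qed
  moreover have "Re (cnj z0 * p) = (cmod z0)\<^sup>2 + r"
    unfolding r_def d_def cmod_power2 by (simp add: power2_eq_square algebra_simps)
  ultimately show ?thesis by simp
qed

lemma cmod_one_minus: "(cmod (1 - w))\<^sup>2 = 1 - 2 * Re w + (cmod w)\<^sup>2"
  unfolding cmod_power2 by (simp add: power2_eq_square algebra_simps)

lemma cont_Max:
  fixes f :: "'i \<Rightarrow> real \<Rightarrow> real"
  assumes "finite I" "I \<noteq> {}" "\<And>i. i \<in> I \<Longrightarrow> continuous_on S (f i)"
  shows "continuous_on S (\<lambda>x. Max ((\<lambda>i. f i x) ` I))"
  using assms
proof (induction I rule: finite_ne_induct)
  case (singleton a) then show ?case by simp
next
  case (insert a F)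
  have "continuous_on S (\<lambda>x. max (f a x) (Max ((\<lambda>i. f i x) ` F)))"
    using insert by (intro continuous_on_max) auto
  then show ?case using insert by simp
qed



theorem mainTheorem6:
  fixes U V :: "complex ^ 'n ^ 'n"
  assumes "unitary_mat U" and "unitary_mat V"
  shows "\<exists>x::real. udist U V = 1/2 * op_norm (U - (\<chi> i j. exp (\<i> * complex_of_real x) * V $ i $ j))"
proof -
  have U1: "U ** adjoint_mat U = mat 1" and U2: "adjoint_mat U ** U = mat 1"
    using assms(1) unfolding unitary_mat_def by auto
  have V1: "V ** adjoint_mat V = mat 1" and V2: "adjoint_mat V ** V = mat 1"
    using assms(2) unfolding unitary_mat_def by auto
  define W where "W = adjoint_mat U ** V"
  have adjW: "adjoint_mat W = adjoint_mat V ** U" by (simp add: W_def adjoint_mult)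
  have w1: "W ** adjoint_mat W = mat 1"
  proof -
    have "W ** adjoint_mat W = adjoint_mat U ** ((V ** adjoint_mat V) ** U)"
      unfolding adjW unfolding W_def by (simp add: matrix_mul_assoc)
    then show ?thesis by (simp add: V1 U2 matrix_mul_lid)
  qed
  have w2: "adjoint_mat W ** W = mat 1"
  proof -
    have "adjoint_mat W ** W = adjoint_mat V ** ((U ** adjoint_mat U) ** V)"
      unfolding adjW unfolding W_def by (simp add: matrix_mul_assoc)
    then show ?thesis by (simp add: U1 V2 matrix_mul_lid)
  qed
  obtain K e l where K0: "0 < K" and orth: "orthn K e"
    and eig: "\<And>i. i < K \<Longrightarrow> W *v e i = l i *s e i"
    and eiga: "\<And>i. i < K \<Longrightarrow> adjoint_mat W *v e i = cnj (l i) *s e i"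
    and lnorm: "\<And>i. i < K \<Longrightarrow> cmod (l i) = 1"
    and ex: "\<forall>v. v = (\<Sum>i<K. cinner (e i) v *s e i)"
    using eigenbasis[OF w1 w2] by blast
  have ortho: "cinner (e i) (e j) = (if i = j then 1 else 0)" if "i < K" "j < K" for i j
    using orth that unfolding orthn_def by blast
  have ne: "norm (e j) = 1" if "j < K" for j
  proof -
    have "complex_of_real ((norm (e j))\<^sup>2) = 1" using ortho[OF that that] by (simp add: cinner_self)
    then have "(norm (e j))\<^sup>2 = 1" by (metis of_real_eq_1_iff)
    then show ?thesis using norm_ge_zero[of "e j"] by (auto simp: power2_eq_1_iff)
  qed
  define z where "z \<phi> = cinner \<phi> (W *v \<phi>)" for \<phi>
  have coefW: "cinner (e i) (W *v \<phi>) = l i * cinner (e i) \<phi>" if "i < K" for i \<phi>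
    by (simp add: cinner_adj eiga[OF that] cinner_scale_left)
  have zform: "z \<phi> = (\<Sum>i<K. l i * complex_of_real ((cmod (cinner (e i) \<phi>))\<^sup>2))" for \<phi>
  proof -
    have "z \<phi> = (\<Sum>i<K. cnj (cinner (e i) \<phi>) * cinner (e i) (W *v \<phi>))"
      unfolding z_def by (rule coeff_expand[OF ex])
    also have "\<dots> = (\<Sum>i<K. l i * complex_of_real ((cmod (cinner (e i) \<phi>))\<^sup>2))"
      by (intro sum.cong refl) (simp add: coefW complex_norm_square del: of_real_power)
    finally show ?thesis .
  qed
  have nform: "(norm \<phi>)\<^sup>2 = (\<Sum>i<K. (cmod (cinner (e i) \<phi>))\<^sup>2)" for \<phi>
    by (rule norm_expand[OF ex])
  have realize: "\<exists>\<psi>. norm \<psi> = 1 \<and> z \<psi> = (\<Sum>i<K. l i * complex_of_real (w i))"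
    if w0: "\<And>i. i < K \<Longrightarrow> w i \<ge> 0" and w1: "(\<Sum>i<K. w i) = 1" for w
  proof -
    define \<psi> where "\<psi> = (\<Sum>i<K. complex_of_real (sqrt (w i)) *s e i)"
    have co: "cinner (e j) \<psi> = complex_of_real (sqrt (w j))" if "j < K" for j
    proof -
      have "cinner (e j) \<psi> = (\<Sum>i<K. if i = j then complex_of_real (sqrt (w i)) else 0)"
        unfolding \<psi>_def cinner_sum_right cinner_scale_right
        by (intro sum.cong refl) (simp add: ortho[OF that])
      also have "\<dots> = complex_of_real (sqrt (w j))" using that by simp
      finally show ?thesis .
    qed
    have "(norm \<psi>)\<^sup>2 = (\<Sum>i<K. w i)"
      unfolding nform by (intro sum.cong refl) (simp add: co w0)
    then have "norm \<psi> = 1" using w1 norm_ge_zero[of \<psi>] by (auto simp: power2_eq_1_iff)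
    moreover have "z \<psi> = (\<Sum>i<K. l i * complex_of_real (w i))"
      unfolding zform by (intro sum.cong refl) (simp add: co w0)
    ultimately show ?thesis by blast
  qed
  have contz: "continuous_on (sphere 0 1) (\<lambda>\<phi>. cmod (z \<phi>))"
    unfolding z_def cinner_def matrix_vector_mult_def by (intro continuous_intros)
  have sne: "sphere (0::complex^'n) 1 \<noteq> {}"
    using vector_choose_size[of 1] by (auto simp: sphere_def)
  obtain \<phi>0 where phi0: "\<phi>0 \<in> sphere 0 1" and phimin: "\<And>\<psi>. \<psi> \<in> sphere 0 1 \<Longrightarrow> cmod (z \<phi>0) \<le> cmod (z \<psi>)"
    using continuous_attains_inf[OF compact_sphere sne contz] by blast
  have nphi0: "norm \<phi>0 = 1" using phi0 by simp
  define m where "m = cmod (z \<phi>0)"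
  have m0: "m \<ge> 0" unfolding m_def by simp
  have sum1: "(\<Sum>i<K. (cmod (cinner (e i) \<phi>0))\<^sup>2) = 1" using nform[of \<phi>0] nphi0 by simp
  have m1: "m \<le> 1"
  proof -
    have "m \<le> (\<Sum>i<K. cmod (l i * complex_of_real ((cmod (cinner (e i) \<phi>0))\<^sup>2)))"
      unfolding m_def zform by (rule norm_sum)
    also have "\<dots> = (\<Sum>i<K. (cmod (cinner (e i) \<phi>0))\<^sup>2)"
      by (intro sum.cong refl) (simp add: norm_mult lnorm norm_power)
    finally show ?thesis using sum1 by simp
  qed
  have D: "udist U V = sqrt (1 - m\<^sup>2)"
    unfolding udist_def
  proof (rule cSup_eq_maximum)
    show "sqrt (1 - m\<^sup>2) \<in> {sqrt (1 - (cmod (cinner \<psi> ((adjoint_mat U ** V) *v \<psi>)))\<^sup>2) | \<psi>. norm \<psi> = 1}"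
      using nphi0 unfolding m_def z_def W_def by blast
    fix y assume "y \<in> {sqrt (1 - (cmod (cinner \<psi> ((adjoint_mat U ** V) *v \<psi>)))\<^sup>2) | \<psi>. norm \<psi> = 1}"
    then obtain \<psi> where y: "y = sqrt (1 - (cmod (z \<psi>))\<^sup>2)" and n\<psi>: "norm \<psi> = 1"
      unfolding z_def W_def by blast
    have "m \<le> cmod (z \<psi>)" using phimin[of \<psi>] n\<psi> unfolding m_def by simp
    then have "m\<^sup>2 \<le> (cmod (z \<psi>))\<^sup>2" using m0 by (simp add: power_mono)
    then show "y \<le> sqrt (1 - m\<^sup>2)" unfolding y by simp
  qed
  define M where "M c = Max ((\<lambda>i. cmod (1 - c * l i)) ` {..<K})" for c
  have Mge: "cmod (1 - c * l i) \<le> M c" if "i < K" for c i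
    unfolding M_def using that by (intro Max_ge) auto
  obtain jM where jM: "\<And>c. jM c < K \<and> M c = cmod (1 - c * l (jM c))"
  proof -
    have "\<forall>c. \<exists>j. j < K \<and> M c = cmod (1 - c * l j)"
    proof
      fix c
      have "M c \<in> (\<lambda>i. cmod (1 - c * l i)) ` {..<K}" unfolding M_def using K0 by (intro Max_in) auto
      then show "\<exists>j. j < K \<and> M c = cmod (1 - c * l j)" by auto
    qed
    then show ?thesis using that by metis
  qed
  have isoU: "norm (adjoint_mat U *v x) = norm x" for x
  proof -
    have "cinner (adjoint_mat U *v x) (adjoint_mat U *v x) = cinner x (U *v (adjoint_mat U *v x))"
      using cinner_adj'[of "adjoint_mat U" x] by simp
    also have "\<dots> = cinner x x" by (simp add: matrix_vector_mul_assoc U1)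
    finally show ?thesis by (simp add: norm_via_cinner)
  qed
  have opn: "op_norm (U - (\<chi> i j. c * V $ i $ j)) = M c" for c
    unfolding op_norm_def
  proof (rule cSup_eq_maximum)
    have nrm: "norm ((U - (\<chi> i j. c * V $ i $ j)) *v \<psi>) = norm (\<psi> - c *s (W *v \<psi>))" for \<psi>
    proof -
      have "(U - (\<chi> i j. c * V $ i $ j)) *v \<psi> = U *v \<psi> - c *s (V *v \<psi>)"
        by (simp add: vec_eq_iff matrix_vector_mult_def sum_subtractf[symmetric] sum_distrib_left
            algebra_simps)
      moreover have "adjoint_mat U *v (U *v \<psi> - c *s (V *v \<psi>)) = \<psi> - c *s (W *v \<psi>)"
        by (simp add: mv_diff mv_scale matrix_vector_mul_assoc U2 W_def)
      ultimately show ?thesis using isoU by metis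
    qed
    have co: "cinner (e i) (\<psi> - c *s (W *v \<psi>)) = (1 - c * l i) * cinner (e i) \<psi>" if "i < K" for i \<psi>
      using that by (simp add: cinner_diff_right cinner_scale_right coefW algebra_simps)
    have sq: "(norm (\<psi> - c *s (W *v \<psi>)))\<^sup>2 = (\<Sum>i<K. (cmod (1 - c * l i))\<^sup>2 * (cmod (cinner (e i) \<psi>))\<^sup>2)" for \<psi>
      unfolding nform[of "\<psi> - c *s (W *v \<psi>)"]
      by (intro sum.cong refl) (simp add: co norm_mult power_mult_distrib)
    have M0: "M c \<ge> 0" using Mge[of 0 c] K0 by (meson norm_ge_zero order_trans)
    show "M c \<in> {norm ((U - (\<chi> i j. c * V $ i $ j)) *v \<psi>) | \<psi>. norm \<psi> = 1}"
    proof -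
      define j where "j = jM c"
      have j: "j < K" "M c = cmod (1 - c * l j)" using jM unfolding j_def by auto
      have "(norm (e j - c *s (W *v e j)))\<^sup>2 = (\<Sum>i<K. if i = j then (cmod (1 - c * l i))\<^sup>2 else 0)"
        unfolding sq by (intro sum.cong refl) (simp add: ortho j)
      also have "\<dots> = (M c)\<^sup>2" using j by simp
      finally have "norm (e j - c *s (W *v e j)) = M c"
        using M0 by (simp add: power2_eq_iff_nonneg)
      then have h: "norm ((U - (\<chi> i j. c * V $ i $ j)) *v e j) = M c" by (simp only: nrm)
      show ?thesis by (rule CollectI, rule exI[of _ "e j"]) (use h ne[OF j(1)] in simp)
    qed
    fix y assume "y \<in> {norm ((U - (\<chi> i j. c * V $ i $ j)) *v \<psi>) | \<psi>. norm \<psi> = 1}"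
    then obtain \<psi> where y0: "y = norm ((U - (\<chi> i j. c * V $ i $ j)) *v \<psi>)" and n\<psi>: "norm \<psi> = 1"
      by blast
    have y: "y = norm (\<psi> - c *s (W *v \<psi>))" unfolding y0 by (rule nrm)
    have "y\<^sup>2 \<le> (\<Sum>i<K. (M c)\<^sup>2 * (cmod (cinner (e i) \<psi>))\<^sup>2)"
      unfolding y sq
      by (intro sum_mono mult_right_mono power_mono Mge) auto
    also have "\<dots> = (M c)\<^sup>2" using nform[of \<psi>] n\<psi> by (simp add: sum_distrib_left[symmetric])
    finally have "y\<^sup>2 \<le> (M c)\<^sup>2" .
    then show "y \<le> M c" using M0 by (rule power2_le_imp_le)
  qed
  define F where "F x = M (exp (\<i> * complex_of_real x)) / 2" for x :: real
  have goal: "udist U V = 1/2 * op_norm (U - (\<chi> i j. exp (\<i> * complex_of_real x) * V $ i $ j))"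
    if "F x = sqrt (1 - m\<^sup>2)" for x
    using that unfolding D opn F_def by simp
  have contF: "continuous_on UNIV F"
  proof -
    have "continuous_on UNIV (\<lambda>x. Max ((\<lambda>i. cmod (1 - exp (\<i> * complex_of_real x) * l i)) ` {..<K}))"
      using K0 by (intro cont_Max) (auto intro!: continuous_intros)
    then show ?thesis unfolding F_def M_def by (intro continuous_intros) auto
  qed
  have cmodexp: "cmod (exp (\<i> * complex_of_real x)) = 1" for x
    by (metis mult.commute norm_exp_i_times)
  have expcis: "exp (\<i> * complex_of_real x) = cis x" for x
    by (simp add: cis_conv_exp)
  define x1 where "x1 = pi - Arg (l 0)"
  have l0: "cis (Arg (l 0)) = l 0"
  proof -
    have "l 0 \<noteq> 0" using lnorm[OF K0] by auto
    then have "cis (Arg (l 0)) = sgn (l 0)" by (rule cis_Arg)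
    then show ?thesis using lnorm[OF K0] by (simp add: sgn_eq)
  qed
  have "exp (\<i> * complex_of_real x1) * l 0 = -1"
  proof -
    have "exp (\<i> * complex_of_real x1) * l 0 = cis x1 * cis (Arg (l 0))" by (simp add: expcis l0)
    also have "\<dots> = cis pi" by (simp add: cis_mult x1_def)
    finally show ?thesis by simp
  qed
  then have two: "cmod (1 - exp (\<i> * complex_of_real x1) * l 0) = 2" by simp
  have Mle2: "M c \<le> 2" if "cmod c = 1" for c
    unfolding M_def
  proof (rule Max.boundedI)
    show "finite ((\<lambda>i. cmod (1 - c * l i)) ` {..<K})" by simp
    show "(\<lambda>i. cmod (1 - c * l i)) ` {..<K} \<noteq> {}" using K0 by auto
    fix y assume "y \<in> (\<lambda>i. cmod (1 - c * l i)) ` {..<K}"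
    then obtain i where i: "i < K" "y = cmod (1 - c * l i)" by auto
    have "cmod (1 - c * l i) \<le> cmod 1 + cmod (c * l i)" by (rule norm_triangle_ineq4)
    then show "y \<le> 2" using i that lnorm[OF i(1)] by (simp add: norm_mult)
  qed
  have F1: "F x1 = 1"
  proof -
    have "M (exp (\<i> * complex_of_real x1)) \<le> 2" by (rule Mle2[OF cmodexp])
    moreover have "2 \<le> M (exp (\<i> * complex_of_real x1))"
      using Mge[OF K0, of "exp (\<i> * complex_of_real x1)"] two by simp
    ultimately show ?thesis unfolding F_def by simp
  qed
  show ?thesis
  proof (cases "m = 0")
    case True
    then have "F x1 = sqrt (1 - m\<^sup>2)" using F1 by simp
    then show ?thesis using goal by blast
  next
    case False
    then have mpos: "m > 0" using m0 by simp
    define z0 where "z0 = z \<phi>0"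
    have z0m: "cmod z0 = m" unfolding z0_def m_def ..
    define c0 where "c0 = cnj z0 / complex_of_real m"
    have c0n: "cmod c0 = 1" unfolding c0_def using z0m mpos by (simp add: norm_divide)
    define x0 where "x0 = Arg c0"
    have ex0: "exp (\<i> * complex_of_real x0) = c0"
    proof -
      have "c0 \<noteq> 0" using c0n by auto
      then have "cis (Arg c0) = sgn c0" by (rule cis_Arg)
      then show ?thesis using c0n by (simp add: expcis x0_def sgn_eq)
    qed
    have Rel: "Re (c0 * l j) \<ge> m" if j: "j < K" for j
    proof -
      have "Re (cnj z0 * l j) \<ge> (cmod z0)\<^sup>2"
      proof (rule nearest)
        fix t :: real assume t: "0 < t" "t \<le> 1"
        define w where "w i = (1 - t) * (cmod (cinner (e i) \<phi>0))\<^sup>2 + t * (if i = j then 1 else 0)" for i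
        have wnn: "w i \<ge> 0" for i using t unfolding w_def by auto
        have "(\<Sum>i<K. w i) = (1 - t) * (\<Sum>i<K. (cmod (cinner (e i) \<phi>0))\<^sup>2) + t * (\<Sum>i<K. if i = j then 1 else 0)"
          by (simp only: w_def sum.distrib sum_distrib_left)
        also have "\<dots> = 1" using sum1 j by simp
        finally obtain \<psi> where n\<psi>: "norm \<psi> = 1" and z\<psi>: "z \<psi> = (\<Sum>i<K. l i * complex_of_real (w i))"
          using realize[of w] wnn by blast
        have "z \<psi> = complex_of_real (1 - t) * (\<Sum>i<K. l i * complex_of_real ((cmod (cinner (e i) \<phi>0))\<^sup>2))
            + complex_of_real t * (\<Sum>i<K. if i = j then l i else 0)"
        proof -
          have tw: "l i * complex_of_real (w i) = complex_of_real (1 - t) * (l i * complex_of_real ((cmod (cinner (e i) \<phi>0))\<^sup>2))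
              + complex_of_real t * (if i = j then l i else 0)" for i
            by (cases "i = j") (simp_all add: w_def algebra_simps)
          show ?thesis unfolding z\<psi> by (simp only: tw sum.distrib sum_distrib_left)
        qed
        also have "\<dots> = z0 + complex_of_real t * (l j - z0)"
          using j unfolding z0_def zform[of \<phi>0] by (simp add: algebra_simps)
        finally have "z \<psi> = z0 + complex_of_real t * (l j - z0)" .
        moreover have "cmod z0 \<le> cmod (z \<psi>)" unfolding z0_def using phimin[of \<psi>] n\<psi> by simp
        ultimately show "cmod z0 \<le> cmod (z0 + complex_of_real t * (l j - z0))" by simp
      qed
      then have r1: "Re (cnj z0 * l j) \<ge> m * m" using z0m by (simp add: power2_eq_square)
      have r2: "Re (c0 * l j) = Re (cnj z0 * l j) / m" unfolding c0_def
        by (simp add: Re_divide_of_real)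
      have "m \<le> Re (cnj z0 * l j) / m" using r1 mpos by (simp add: pos_le_divide_eq)
      then show ?thesis unfolding r2 .
    qed
    have F0: "F x0 \<le> sqrt (1 - m\<^sup>2)"
    proof -
      define j where "j = jM c0"
      have j: "j < K" "M c0 = cmod (1 - c0 * l j)" using jM unfolding j_def by auto
      have "(M c0)\<^sup>2 = 1 - 2 * Re (c0 * l j) + (cmod (c0 * l j))\<^sup>2" using j by (simp add: cmod_one_minus)
      also have "\<dots> \<le> 2 - 2 * m" using Rel[OF j(1)] c0n lnorm[OF j(1)] by (simp add: norm_mult)
      finally have "(F x0)\<^sup>2 \<le> (2 - 2 * m) / 4" unfolding F_def ex0 by (simp add: power_divide)
      also have "\<dots> \<le> 1 - m\<^sup>2"
      proof -
        have "0 \<le> (1 - m) * (1 + 2 * m)" using m0 m1 by simp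
        moreover have "(1 - m) * (1 + 2 * m) = 1 + m - 2 * m\<^sup>2" by (simp add: algebra_simps power2_eq_square)
        moreover have "(2 - 2 * m) / 4 = 1/2 - m/2" by simp
        ultimately show ?thesis by linarith
      qed
      finally show ?thesis by (rule real_le_rsqrt)
    qed
    have Dle: "sqrt (1 - m\<^sup>2) \<le> F x1" using F1 m0 by simp
    have "\<exists>x. F x = sqrt (1 - m\<^sup>2)"
    proof (cases "x0 \<le> x1")
      case True
      then show ?thesis using IVT'[of F x0 "sqrt (1 - m\<^sup>2)" x1] F0 Dle contF
        by (meson continuous_on_subset subset_UNIV)
    next
      case False
      then show ?thesis using IVT2'[of F x0 "sqrt (1 - m\<^sup>2)" x1] F0 Dle contF
        by (meson continuous_on_subset subset_UNIV less_imp_le not_le)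
    qed
    then show ?thesis using goal by blast
  qed
qed

end
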